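(* Let $0<\varpi<2$, $0\le\beta_s\le1$ and $\epsilon>0$. Let $X$ be binary with distribution $(p,1-p)$, $p\in[0,1/2]$, and $Y$ the output of the binary symmetric channel $p(y\mid x)=\begin{pmatrix}1-\beta_s&\beta_s\\ \beta_s&1-\beta_s\end{pmatrix}$. Consider $$\max_{p\in[0,1/2]} I(X;Y)\quad\text{subject to}\quad L(\varpi,X)-L(\varpi,X\mid Y)\le\epsilon.$$ Let $C_{\beta_s}=e^{\varpi/2}-\big(\beta_s e^{\varpi(1-\beta_s)}+(1-\beta_s)e^{\varpi\beta_s}\big)$. Then the optimal value equals $1-H(\beta_s)$ if $\epsilon\ge C_{\beta_s}$, and equals $H\big(p_s(1-\beta_s)+(1-p_s)\beta_s\big)-H(\beta_s)$ if $0<\epsilon\le C_{\beta_s}$, where $p_s\in[0,1/2]$ is the solution of $L(\varpi,X)-L(\varpi,X\mid Y)=\epsilon$ (viewed as an equation in $p$).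
   Context: MIM: $L(\varpi,X)=\sum_i p(x_i)e^{\varpi(1-p(x_i))}$. CMIM: $L(\varpi,X\mid Y)=\sum_{j:\,p(y_j)>0}p(y_j)\sum_i p(x_i\mid y_j)e^{\varpi(1-p(x_i\mid y_j))}$, where the joint law is $p(x_i)p(y_j\mid x_i)$ and $p(x_i\mid y_j)=p(x_i)p(y_j\mid x_i)/p(y_j)$. $I(X;Y)=\sum_{i,j}p(x_i)p(y_j\mid x_i)\log_2\frac{p(y_j\mid x_i)}{p(y_j)}$ is the mutual information in bits, and $H(q)=-q\log_2 q-(1-q)\log_2(1-q)$ is the binary entropy function. *)

theory Defs
  imports Complex_Main
begin

text \<open>Finite discrete setting: input alphabet A, output alphabet B, input law px,
  channel W i j = p(y_j | x_i).\<close>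

definition out_prob :: "'a set \<Rightarrow> ('a \<Rightarrow> real) \<Rightarrow> ('a \<Rightarrow> 'b \<Rightarrow> real) \<Rightarrow> 'b \<Rightarrow> real" where
  "out_prob A px W j = (\<Sum>i\<in>A. px i * W i j)"

definition MIM :: "real \<Rightarrow> 'a set \<Rightarrow> ('a \<Rightarrow> real) \<Rightarrow> real" where
  "MIM w A px = (\<Sum>i\<in>A. px i * exp (w * (1 - px i)))"

definition CMIM :: "real \<Rightarrow> 'a set \<Rightarrow> 'b set \<Rightarrow> ('a \<Rightarrow> real) \<Rightarrow> ('a \<Rightarrow> 'b \<Rightarrow> real) \<Rightarrow> real" where
  "CMIM w A B px W =
     (\<Sum>j\<in>{j\<in>B. out_prob A px W j > 0}.
        out_prob A px W j *
        (\<Sum>i\<in>A. (px i * W i j / out_prob A px W j) *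
                  exp (w * (1 - px i * W i j / out_prob A px W j))))"

definition mutual_info :: "'a set \<Rightarrow> 'b set \<Rightarrow> ('a \<Rightarrow> real) \<Rightarrow> ('a \<Rightarrow> 'b \<Rightarrow> real) \<Rightarrow> real" where
  "mutual_info A B px W =
     (\<Sum>i\<in>A. \<Sum>j\<in>B. px i * W i j * log 2 (W i j / out_prob A px W j))"

definition bin_entropy :: "real \<Rightarrow> real" where
  "bin_entropy q = - q * log 2 q - (1 - q) * log 2 (1 - q)"

text \<open>Binary input with law (p, 1-p): True is x_1, False is x_2.\<close>
definition bin_input :: "real \<Rightarrow> bool \<Rightarrow> real" where
  "bin_input p x = (if x then p else 1 - p)"

definition bsc :: "real \<Rightarrow> bool \<Rightarrow> bool \<Rightarrow> real" where
  "bsc b x y = (if x = y then 1 - b else b)"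

text \<open>Privacy leakage L(w,X) - L(w,X|Y) for the binary input p through BSC(b).\<close>
definition leak :: "real \<Rightarrow> real \<Rightarrow> real \<Rightarrow> real" where
  "leak w b p = MIM w UNIV (bin_input p) - CMIM w UNIV UNIV (bin_input p) (bsc b)"

definition bsc_MI :: "real \<Rightarrow> real \<Rightarrow> real" where
  "bsc_MI b p = mutual_info UNIV UNIV (bin_input p) (bsc b)"

definition is_opt_value :: "real \<Rightarrow> real \<Rightarrow> real \<Rightarrow> real \<Rightarrow> bool" where
  "is_opt_value w b eps v \<longleftrightarrow>
     (\<exists>p\<in>{0..1/2}. leak w b p \<le> eps \<and> bsc_MI b p = v) \<and>
     (\<forall>p\<in>{0..1/2}. leak w b p \<le> eps \<longrightarrow> bsc_MI b p \<le> v)"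

end

theory Submission
  imports Defs
begin


definition Fm :: "real \<Rightarrow> real \<Rightarrow> real" where
  "Fm W x = ((1-x)*exp(W*x) + (1+x)*exp(-(W*x)))/2"
definition F1 :: "real \<Rightarrow> real \<Rightarrow> real" where
  "F1 W x = ((W*(1-x) - 1)*exp(W*x) + (1 - W*(1+x))*exp(-(W*x)))/2"
definition gg :: "real \<Rightarrow> real \<Rightarrow> real" where
  "gg W x = (2 - W*(1-x))*exp(W*x) + (2 - W*(1+x))*exp(-(W*x))"
definition gg1 :: "real \<Rightarrow> real \<Rightarrow> real" where
  "gg1 W x = W*((3 - W + W*x)*exp(W*x) - (3 - W - W*x)*exp(-(W*x)))"

lemma Fm_deriv: "(Fm W has_real_derivative F1 W x) (at x)"
  unfolding Fm_def F1_def
  by (rule derivative_eq_intros refl | simp)+ (simp add: field_simps)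

lemma F1_deriv: "(F1 W has_real_derivative (-(W/2) * gg W x)) (at x)"
  unfolding gg_def F1_def
  by (rule derivative_eq_intros refl | simp)+ (simp add: field_simps)

lemma gg_deriv: "(gg W has_real_derivative gg1 W x) (at x)"
  unfolding gg_def gg1_def
  by (rule derivative_eq_intros refl | simp)+ (simp add: field_simps)

lemma Fm_even: "Fm W (-x) = Fm W x" unfolding Fm_def by (simp add: field_simps)
lemma F1_odd: "F1 W (-x) = - F1 W x" unfolding F1_def by (simp add: field_simps)
lemma gg_even: "gg W (-x) = gg W x" unfolding gg_def by (simp add: field_simps)



lemma sinh_le_aux:
  fixes u :: real assumes "0 \<le> u"
  shows "exp u - exp (-u) \<le> u * (exp u + exp (-u))"
proof -
  define h where "h = (\<lambda>u::real. u * (exp u + exp (-u)) - (exp u - exp (-u)))"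
  have "h 0 \<le> h u"
  proof (rule DERIV_nonneg_imp_nondecreasing[OF assms])
    fix x :: real assume x: "0 \<le> x" "x \<le> u"
    have "(h has_real_derivative x * (exp x - exp (-x))) (at x)"
      unfolding h_def
      by (rule derivative_eq_intros refl | simp add: field_simps)+
    moreover have "x * (exp x - exp (-x)) \<ge> 0" using x by simp
    ultimately show "\<exists>y. (h has_real_derivative y) (at x) \<and> 0 \<le> y" by blast
  qed
  then show ?thesis unfolding h_def by simp
qed

lemma exp_ge_expneg: "0 \<le> (u::real) \<Longrightarrow> exp (-u) \<le> exp u" by simp

definition Qf :: "real \<Rightarrow> real \<Rightarrow> real" where
  "Qf W x = (1 - x^2)^2 * gg W x"

lemma Qf_deriv: "(Qf W has_real_derivative
   (-4*x*(1-x^2)*gg W x + (1-x^2)^2 * gg1 W x)) (at x)"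
  unfolding Qf_def
  by (rule derivative_eq_intros gg_deriv refl | simp add: field_simps power2_eq_square)+

lemma Qf_deriv_neg:
  assumes W: "0 < W" "W < 1" and x: "0 < x" "x < 1"
  shows "-4*x*(1-x^2)*gg W x + (1-x^2)^2 * gg1 W x < 0"
proof -
  define E where "E = exp (W*x)"
  define E' where "E' = exp (-(W*x))"
  have u: "0 < W*x" using W x by simp
  have EE: "E' \<le> E" "0 < E" "0 < E'" unfolding E_def E'_def using u by auto
  have sh: "E - E' \<le> (W*x) * (E + E')" unfolding E_def E'_def using sinh_le_aux[of "W*x"] u by simp
  have g1: "gg1 W x = W*((3-W)*(E-E') + W*x*(E+E'))"
    unfolding gg1_def E_def E'_def by (simp add: algebra_simps)
  have g: "gg W x = (2-W)*(E+E') + W*x*(E-E')"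
    unfolding gg_def E_def E'_def by (simp add: algebra_simps)
  have g1le: "gg1 W x \<le> W^2*x*(4-W)*(E+E')"
  proof -
    have "(3-W)*(E-E') \<le> (3-W)*((W*x)*(E+E'))" using sh W by (intro mult_left_mono) auto
    then have "W*((3-W)*(E-E') + W*x*(E+E')) \<le> W*((3-W)*((W*x)*(E+E')) + W*x*(E+E'))"
      using W by (intro mult_left_mono) auto
    then show ?thesis unfolding g1 by (simp add: algebra_simps power2_eq_square)
  qed
  have g1nn: "0 \<le> gg1 W x" unfolding g1 using W EE u x by (intro mult_nonneg_nonneg add_nonneg_nonneg) auto
  have gge: "(2-W)*(E+E') \<le> gg W x" unfolding g using u EE by simp
  have s: "0 < 1 - x^2" "1 - x^2 \<le> 1" using x mult_strict_mono[of x 1 x 1] by (auto simp: power2_eq_square)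
  have poly: "W^2*(4-W) < 4*(2-W)"
  proof -
    have "W*W < 1" using W mult_strict_mono[of W 1 W 1] by auto
    moreover have "0 < W*(W*W)" using W by simp
    moreover have "W^2*(4-W) = 4*(W*W) - W*(W*W)" by (simp add: power2_eq_square algebra_simps)
    ultimately show ?thesis using W by argo
  qed
  have "(1-x^2) * gg1 W x \<le> gg1 W x" using s g1nn by (simp add: mult_left_le_one_le)
  also have "\<dots> \<le> W^2*x*(4-W)*(E+E')" by (fact g1le)
  also have "\<dots> < 4*x*((2-W)*(E+E'))"
  proof -
    have "0 < x*(E+E')" using x EE by simp
    from mult_strict_right_mono[OF poly this] show ?thesis by (simp add: algebra_simps)
  qed
  also have "\<dots> \<le> 4*x*gg W x" using gge x by simp
  finally have "(1-x^2) * gg1 W x < 4*x*gg W x" .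
  then have "(1-x^2) * ((1-x^2) * gg1 W x) < (1-x^2)*(4*x*gg W x)"
    using s by (intro mult_strict_left_mono) auto
  then show ?thesis by (simp add: algebra_simps power2_eq_square)
qed

lemma Qf_cont: "continuous_on S (Qf W)"
  using Qf_deriv by (meson DERIV_isCont continuous_at_imp_continuous_on)

lemma Qf_strict_decr:
  assumes W: "0 < W" "W < 1" and xy: "0 \<le> x" "x < y" "y \<le> 1"
  shows "Qf W y < Qf W x"
proof (rule DERIV_neg_imp_decreasing_open[OF xy(2)])
  fix z assume "x < z" "z < y"
  then show "\<exists>d. (Qf W has_real_derivative d) (at z) \<and> d < 0"
    using Qf_deriv Qf_deriv_neg[OF W] xy by (meson le_less_trans less_le_trans)
qed (rule Qf_cont)

lemma Qf_even: "Qf W (-x) = Qf W x" unfolding Qf_def by (simp add: gg_even)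



definition tau :: "real \<Rightarrow> real \<Rightarrow> real" where "tau d s = (s+d)/(1+d*s)"
definition alpha :: "real \<Rightarrow> real \<Rightarrow> real \<Rightarrow> real" where
  "alpha W d x = (1+d*x)*F1 W x - d*Fm W x"
definition beta :: "real \<Rightarrow> real \<Rightarrow> real \<Rightarrow> real" where
  "beta W d x = (1-d*x)*F1 W x + d*Fm W x"
definition VV :: "real \<Rightarrow> real \<Rightarrow> real \<Rightarrow> real" where
  "VV W d s = beta W d (tau d s) - alpha W d s"

lemma sq_lt1: "-1 < (s::real) \<Longrightarrow> s < 1 \<Longrightarrow> s*s < 1"
  using abs_square_less_1[of s] by (simp add: power2_eq_square abs_less_iff)

lemma alpha_deriv: "(alpha W d has_real_derivative (-(W/2)*(1+d*x)*gg W x)) (at x)"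
  unfolding alpha_def
  by (rule derivative_eq_intros Fm_deriv F1_deriv refl | simp add: field_simps)+

lemma beta_deriv: "(beta W d has_real_derivative (-(W/2)*(1-d*x)*gg W x)) (at x)"
  unfolding beta_def
  by (rule derivative_eq_intros Fm_deriv F1_deriv refl | simp add: field_simps)+

lemma tau_deriv: "1 + d*s \<noteq> 0 \<Longrightarrow> (tau d has_real_derivative ((1-d^2)/(1+d*s)^2)) (at s)"
  unfolding tau_def
  by (rule derivative_eq_intros refl | simp add: field_simps power2_eq_square)+

lemma VV_deriv: assumes "1 + d*s \<noteq> 0"
  shows "(VV W d has_real_derivative
    (-(W/2)*(1-d*tau d s)*gg W (tau d s) * ((1-d^2)/(1+d*s)^2) + (W/2)*(1+d*s)*gg W s)) (at s)"
proof -
  have "((\<lambda>s. beta W d (tau d s)) has_real_derivative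
     (-(W/2)*(1-d*tau d s)*gg W (tau d s)) * ((1-d^2)/(1+d*s)^2)) (at s)"
    by (rule DERIV_chain2[OF beta_deriv tau_deriv[OF assms]])
  from DERIV_diff[OF this alpha_deriv[of W d s]] show ?thesis
    unfolding VV_def by (simp add: algebra_simps)
qed

lemma alpha_neg: "alpha W d (-x) = - beta W d x"
  unfolding alpha_def beta_def by (simp add: Fm_even F1_odd algebra_simps)

lemma tau_props:
  assumes d: "0 < d" "d < 1" and s: "-1 < s" "s < 1"
  shows "0 < 1 + d*s" "1 - d * tau d s = (1-d^2)/(1+d*s)"
        "1 - (tau d s)^2 = (1-d^2)*(1-s^2)/(1+d*s)^2"
        "s < tau d s" "tau d s < 1"
proof -
  have ds: "-d < d*s" "d*s < d" using d s by (auto simp: mult_strict_left_mono[of "-1" s d, simplified] )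
  show p: "0 < 1 + d*s" using ds d by linarith
  show "1 - d * tau d s = (1-d^2)/(1+d*s)"
    unfolding tau_def using p by (simp add: field_simps power2_eq_square)
  show "1 - (tau d s)^2 = (1-d^2)*(1-s^2)/(1+d*s)^2"
  proof -
    have t: "(tau d s)^2 = (s+d)^2/(1+d*s)^2" by (simp add: tau_def power_divide)
    have "1 - (s+d)^2/(1+d*s)^2 = ((1+d*s)^2 - (s+d)^2)/(1+d*s)^2" using p by (simp add: field_simps)
    also have "(1+d*s)^2 - (s+d)^2 = (1-d^2)*(1-s^2)" by (simp add: power2_eq_square algebra_simps)
    finally show ?thesis using t by simp
  qed
  have "tau d s - s = d*(1-s^2)/(1+d*s)"
    unfolding tau_def using p by (simp add: field_simps power2_eq_square)
  moreover have "0 < d*(1-s^2)/(1+d*s)" using d s p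
    by (intro divide_pos_pos mult_pos_pos) (auto simp: power2_eq_square sq_lt1)
  ultimately show "s < tau d s" by linarith
  have "1 - tau d s = (1-d)*(1-s)/(1+d*s)"
    unfolding tau_def using p by (simp add: field_simps)
  moreover have "0 < (1-d)*(1-s)/(1+d*s)" using d s p by simp
  ultimately show "tau d s < 1" by linarith
qed



lemma gen_alg1: "P \<noteq> 0 \<Longrightarrow> B \<noteq> 0 \<Longrightarrow> P*(A*B/P^2)^2/B^2 = A^2/(P::real)^3"
  by (simp add: field_simps power2_eq_square power3_eq_cube)
lemma gen_alg2: "P \<noteq> 0 \<Longrightarrow> (A/P) * (A/P^2) = A^2/(P::real)^3"
  by (simp add: field_simps power2_eq_square power3_eq_cube)

lemma VV_deriv_pos:
  assumes W: "0 < W" "W < 1" and d: "0 < d" "d < 1" and s: "-1 < s" "s < 1"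
    and c: "d*s^2 + 2*s + d > 0"
  shows "-(W/2)*(1-d*tau d s)*gg W (tau d s) * ((1-d^2)/(1+d*s)^2) + (W/2)*(1+d*s)*gg W s > 0"
proof -
  note tp = tau_props[OF d s]
  define t where "t = tau d s"
  have p: "0 < 1 + d*s" by (fact tp(1))
  have ss: "0 < 1 - s^2" using sq_lt1[OF s] by (simp add: power2_eq_square)
  have abs_lt: "\<bar>s\<bar> < t"
  proof (cases "s \<ge> 0")
    case True then show ?thesis using tp(4) unfolding t_def by simp
  next
    case False
    have "t + s = (d*s^2 + 2*s + d)/(1+d*s)"
      unfolding t_def tau_def using p by (simp add: field_simps power2_eq_square)
    moreover have "(d*s^2 + 2*s + d)/(1+d*s) > 0" using c p by simp
    ultimately show ?thesis using False by linarith
  qed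
  have t1: "t < 1" unfolding t_def by (fact tp(5))
  have Qlt: "Qf W t < Qf W s"
    using Qf_strict_decr[OF W, of "\<bar>s\<bar>" t] abs_lt t1 Qf_even[of W s]
    by (cases "s \<ge> 0") auto
  have e1: "1 - d*t = (1-d^2)/(1+d*s)" unfolding t_def by (fact tp(2))
  have e2: "1 - t^2 = (1-d^2)*(1-s^2)/(1+d*s)^2" unfolding t_def by (fact tp(3))
  have k1: "(1-d*t) * ((1-d^2)/(1+d*s)^2) = (1+d*s) * (1-t^2)^2 / (1-s^2)^2"
  proof -
    have a: "(1-d*t) * ((1-d^2)/(1+d*s)^2) = (1-d^2)^2/(1+d*s)^3"
      unfolding e1 using p gen_alg2[of "1+d*s" "1-d^2"] by simp
    have b: "(1+d*s) * (1-t^2)^2 / (1-s^2)^2 = (1-d^2)^2/(1+d*s)^3"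
      unfolding e2 using p ss gen_alg1[of "1+d*s" "1-s^2" "1-d^2"] by simp
    show ?thesis using a b by simp
  qed
  have "(1-d*t) * gg W t * ((1-d^2)/(1+d*s)^2) = (1+d*s) * Qf W t / (1-s^2)^2"
  proof -
    have "(1-d*t) * gg W t * ((1-d^2)/(1+d*s)^2) = ((1-d*t) * ((1-d^2)/(1+d*s)^2)) * gg W t"
      by (simp add: ac_simps)
    also have "\<dots> = ((1+d*s) * (1-t^2)^2 / (1-s^2)^2) * gg W t" using k1 by simp
    also have "\<dots> = (1+d*s) * Qf W t / (1-s^2)^2" unfolding Qf_def by simp
    finally show ?thesis .
  qed
  moreover have "(1+d*s)*gg W s = (1+d*s) * Qf W s / (1-s^2)^2"
    unfolding Qf_def using ss by simp
  moreover have "(1+d*s) * Qf W t / (1-s^2)^2 < (1+d*s) * Qf W s / (1-s^2)^2"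
    using Qlt p ss by (intro divide_strict_right_mono mult_strict_left_mono) auto
  ultimately have "(1-d*t) * gg W t * ((1-d^2)/(1+d*s)^2) < (1+d*s)*gg W s" by simp
  then have "(W/2)*((1-d*t) * gg W t * ((1-d^2)/(1+d*s)^2)) < (W/2)*((1+d*s)*gg W s)"
    using W by (intro mult_strict_left_mono) auto
  moreover have "\<And>a b c X e f::real. -a*b*c*X + a*e*f = a*(e*f) - a*(b*c*X)" by (simp add: algebra_simps)
  ultimately show ?thesis unfolding t_def[symmetric] by (metis diff_gt_0_iff_gt)
qed



lemma tau_tau_neg:
  assumes d: "0 < d" "d < 1" and s: "-1 < s" "s < 1"
  shows "tau d (- tau d s) = - s"
proof -
  have p: "0 < 1 + d*s" by (rule tau_props(1)[OF d s])
  have "d*d < 1" using d mult_strict_mono[of d 1 d 1] by simp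
  then have q: "1 - d^2 \<noteq> 0" by (simp add: power2_eq_square)
  have n1: "- tau d s + d = -s*(1-d^2)/(1+d*s)" unfolding tau_def using p by (simp add: field_simps power2_eq_square)
  have n2: "1 + d * (- tau d s) = (1-d^2)/(1+d*s)" unfolding tau_def using p by (simp add: field_simps power2_eq_square)
  show ?thesis unfolding tau_def[of d "- tau d s"] n1 n2 using p q by simp
qed

lemma VV_sym:
  assumes d: "0 < d" "d < 1" and s: "-1 < s" "s < 1"
  shows "VV W d (- tau d s) = VV W d s"
proof -
  have "beta W d (-s) = - alpha W d s" using alpha_neg[of W d "-s"] by simp
  then show ?thesis unfolding VV_def tau_tau_neg[OF d s] alpha_neg by simp
qed

lemma VV_incr:
  assumes W: "0 < W" "W < 1" and d: "0 < d" "d < 1"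
    and ab: "-1 < a" "a < b" "b < 1" and ca: "d*a^2 + 2*a + d \<ge> 0"
  shows "VV W d a < VV W d b"
proof (rule DERIV_pos_imp_increasing_open[OF ab(2)])
  fix x assume x: "a < x" "x < b"
  have xs: "-1 < x" "x < 1" using x ab by auto
  have "d*x^2 + 2*x + d - (d*a^2 + 2*a + d) = (x-a)*(d*(x+a)+2)" by (simp add: algebra_simps power2_eq_square)
  moreover have "0 < d*(x+a)+2"
  proof -
    have "-2 < x + a" using xs ab by simp
    then have "d*(-2) < d*(x+a)" using d by (intro mult_strict_left_mono) auto
    then show ?thesis using d by linarith
  qed
  moreover have "0 < x - a" using x by simp
  ultimately have cx: "d*x^2 + 2*x + d > 0" using ca by (smt (verit) mult_pos_pos)
  show "\<exists>y. (VV W d has_real_derivative y) (at x) \<and> y > 0"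
    using VV_deriv[OF tau_props(1)[OF d xs, THEN less_imp_neq, symmetric]] VV_deriv_pos[OF W d xs cx] by blast
next
  show "continuous_on {a..b} (VV W d)"
  proof (intro continuous_at_imp_continuous_on ballI)
    fix x assume "x \<in> {a..b}"
    then have xs: "-1 < x" "x < 1" using ab by auto
    show "isCont (VV W d) x"
      using VV_deriv[OF tau_props(1)[OF d xs, THEN less_imp_neq, symmetric]] by (rule DERIV_isCont)
  qed
qed

definition m1f :: "real \<Rightarrow> real \<Rightarrow> real" where "m1f d m = (m-d)/(1-d*m)"

lemma core_ineq:
  assumes W: "0 < W" "W < 1" and d: "0 < d" "d < 1" and m: "0 < m" "m < 1"
  shows "VV W d (m1f d m) < VV W d m"
proof -
  have dm: "0 < 1 - d*m" using d m mult_strict_mono[of d 1 m 1] by simp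
  define m1 where "m1 = m1f d m"
  have m1a: "-1 < m1"
  proof -
    have "m1 + 1 = (1+m)*(1-d)/(1-d*m)" unfolding m1_def m1f_def using dm by (simp add: field_simps)
    moreover have "0 < (1+m)*(1-d)/(1-d*m)" using dm d m by simp
    ultimately show ?thesis by linarith
  qed
  have m1b: "m1 < m"
  proof -
    have "m - m1 = d*(1-m^2)/(1-d*m)" unfolding m1_def m1f_def using dm by (simp add: field_simps power2_eq_square)
    moreover have "0 < d*(1-m^2)/(1-d*m)" using dm d m sq_lt1[of m] by (simp add: power2_eq_square)
    ultimately show ?thesis by linarith
  qed
  have m1s: "-1 < m1" "m1 < 1" using m1a m1b m by auto
  have dd: "0 < 1 - d*d" using d mult_strict_mono[of d 1 d 1] by simp
  have n1: "m1 + d = m*(1-d*d)/(1-d*m)" unfolding m1_def m1f_def using dm by (simp add: field_simps)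
  have n2: "1 + d*m1 = (1-d*d)/(1-d*m)" unfolding m1_def m1f_def using dm by (simp add: field_simps)
  have taum1: "tau d m1 = m"
    unfolding tau_def n1 n2 using dm dd by simp
  show ?thesis
  proof (cases "d*m1^2 + 2*m1 + d \<ge> 0")
    case True
    from VV_incr[OF W d m1a m1b _ True] m show ?thesis unfolding m1_def by simp
  next
    case False
    have p1: "0 < 1 + d*m1" by (rule tau_props(1)[OF d m1s])
    have ident: "d*(-m)^2 + 2*(-m) + d = -(1-d^2)*(d*m1^2 + 2*m1 + d)/(1+d*m1)^2"
    proof -
      have "-m = - tau d m1" using taum1 by simp
      have "d*(- tau d m1)^2 + 2*(- tau d m1) + d = -(1-d^2)*(d*m1^2 + 2*m1 + d)/(1+d*m1)^2"
      proof -
        have g: "\<And>N P::real. P \<noteq> 0 \<Longrightarrow> d*(-(N/P))^2 + 2*(-(N/P)) + d = (d*N^2 - 2*N*P + d*P^2)/P^2"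
          by (simp add: field_simps power2_eq_square)
        have "d*(m1+d)^2 - 2*(m1+d)*(1+d*m1) + d*(1+d*m1)^2 = -(1-d^2)*(d*m1^2 + 2*m1 + d)"
          by (simp add: power2_eq_square algebra_simps)
        then show ?thesis unfolding tau_def using g[of "1+d*m1" "m1+d"] p1 by simp
      qed
      then show ?thesis using taum1 by simp
    qed
    have "0 < 1 - d^2" using d mult_strict_mono[of d 1 d 1] by (simp add: power2_eq_square)
    moreover have "0 < -(d*m1^2 + 2*m1 + d)" using False by simp
    ultimately have "0 < (1-d^2)*(-(d*m1^2 + 2*m1 + d))/(1+d*m1)^2" using p1 by simp
    then have cpos: "d*(-m)^2 + 2*(-m) + d \<ge> 0" unfolding ident by (simp add: algebra_simps)
    have "VV W d (-m) < VV W d m" using VV_incr[OF W d _ _ _ cpos] m by simp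
    moreover have "VV W d (-m) = VV W d m1" using VV_sym[OF d m1s, of W] taum1 by simp
    ultimately show ?thesis unfolding m1_def by simp
  qed
qed



lemma m1f_tau: "m1f d m = tau (-d) m" unfolding m1f_def tau_def by (simp add: algebra_simps)

definition Lam :: "real \<Rightarrow> real \<Rightarrow> real \<Rightarrow> real" where
  "Lam W d m = Fm W m - (1-d*m)/2 * Fm W (tau (-d) m) - (1+d*m)/2 * Fm W (tau d m)"

lemma Lam_sym: "Lam W (-d) m = Lam W d m" unfolding Lam_def by (simp add: algebra_simps)

lemma Lam_deriv:
  assumes p: "1 + d*m \<noteq> 0" and q: "1 - d*m \<noteq> 0"
  shows "(Lam W d has_real_derivative
     (alpha W d m + beta W d m - alpha W d (tau (-d) m) - beta W d (tau d m))/2) (at m)"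
proof -
  have q': "1 + (-d)*m \<noteq> 0" using q by simp
  have D1: "((\<lambda>m. Fm W (tau (-d) m)) has_real_derivative F1 W (tau (-d) m) * ((1-(-d)^2)/(1+(-d)*m)^2)) (at m)"
    by (rule DERIV_chain2[OF Fm_deriv tau_deriv[OF q']])
  have D2: "((\<lambda>m. Fm W (tau d m)) has_real_derivative F1 W (tau d m) * ((1-d^2)/(1+d*m)^2)) (at m)"
    by (rule DERIV_chain2[OF Fm_deriv tau_deriv[OF p]])
  have "(Lam W d has_real_derivative
     F1 W m - ((-d)/2 * Fm W (tau (-d) m) + (1-d*m)/2 * (F1 W (tau (-d) m) * ((1-(-d)^2)/(1+(-d)*m)^2)))
       - (d/2 * Fm W (tau d m) + (1+d*m)/2 * (F1 W (tau d m) * ((1-d^2)/(1+d*m)^2)))) (at m)" (is "(_ has_real_derivative ?E) _")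
    unfolding Lam_def
    by (rule derivative_eq_intros Fm_deriv D1 D2 refl | simp add: mult_ac)+
  note dd = this
  have g: "\<And>P A::real. P \<noteq> 0 \<Longrightarrow> P/2*(A/P^2) = (A/P)/2" by (simp add: field_simps power2_eq_square)
  have t1: "1 + d * tau (-d) m = (1-d^2)/(1-d*m)" unfolding tau_def using q by (simp add: field_simps power2_eq_square)
  have t2: "1 - d * tau d m = (1-d^2)/(1+d*m)" unfolding tau_def using p by (simp add: field_simps power2_eq_square)
  have e1: "(1-d*m)/2 * ((1-(-d)^2)/(1+(-d)*m)^2) = (1 + d * tau (-d) m)/2"
    unfolding t1 using g[OF q, of "1-d^2"] by simp
  have e2: "(1+d*m)/2 * ((1-d^2)/(1+d*m)^2) = (1 - d * tau d m)/2"
    unfolding t2 using g[OF p, of "1-d^2"] by simp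
  have "F1 W m - ((-d)/2 * Fm W (tau (-d) m) + (1-d*m)/2 * (F1 W (tau (-d) m) * ((1-(-d)^2)/(1+(-d)*m)^2)))
       - (d/2 * Fm W (tau d m) + (1+d*m)/2 * (F1 W (tau d m) * ((1-d^2)/(1+d*m)^2)))
     = F1 W m - ((-d)/2 * Fm W (tau (-d) m) + ((1-d*m)/2 * ((1-(-d)^2)/(1+(-d)*m)^2)) * F1 W (tau (-d) m))
       - (d/2 * Fm W (tau d m) + ((1+d*m)/2 * ((1-d^2)/(1+d*m)^2)) * F1 W (tau d m))"
    by (simp only: mult_ac)
  also have "\<dots> = (alpha W d m + beta W d m - alpha W d (tau (-d) m) - beta W d (tau d m))/2"
    unfolding e1 e2 alpha_def beta_def by (simp add: field_simps)
  finally show ?thesis by (rule DERIV_cong[OF dd])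
qed



lemma dm_bounds: fixes d m :: real assumes "\<bar>d\<bar> < 1" "\<bar>m\<bar> \<le> 1" shows "0 < 1 + d*m" "0 < 1 - d*m"
proof -
  have "\<bar>d\<bar>*\<bar>m\<bar> \<le> \<bar>d\<bar>" using assms(2) by (simp add: mult_left_le)
  then have "\<bar>d*m\<bar> < 1" using assms by (simp add: abs_mult)
  then show "0 < 1 + d*m" "0 < 1 - d*m" by auto
qed

lemma tau_inv: fixes d m :: real assumes "1 - d*m \<noteq> 0" "d*d \<noteq> 1" shows "tau d (tau (-d) m) = m"
proof -
  have n1: "tau (-d) m + d = m*(1-d*d)/(1-d*m)" unfolding tau_def using assms by (simp add: field_simps)
  have n2: "1 + d*tau (-d) m = (1-d*d)/(1-d*m)" unfolding tau_def using assms by (simp add: field_simps)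
  show ?thesis unfolding tau_def[of d] n1 n2 using assms by simp
qed

lemma Lam_deriv_neg:
  assumes W: "0 < W" "W < 1" and d: "0 < d" "d < 1" and m: "0 < m" "m < 1"
  shows "(alpha W d m + beta W d m - alpha W d (tau (-d) m) - beta W d (tau d m))/2 < 0"
proof -
  have b: "0 < 1 + d*m" "0 < 1 - d*m" using dm_bounds[of d m] d m by auto
  have dd: "d*d \<noteq> 1" using d mult_strict_mono[of d 1 d 1] by auto
  have "VV W d (tau (-d) m) = beta W d m - alpha W d (tau (-d) m)"
  proof -
    have "tau d (tau (-d) m) = m" using tau_inv[of d m] b dd by simp
    then show ?thesis unfolding VV_def by simp
  qed
  moreover have "VV W d m = beta W d (tau d m) - alpha W d m" unfolding VV_def ..
  moreover have "VV W d (tau (-d) m) < VV W d m" using core_ineq[OF W d m] m1f_tau by simp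
  ultimately show ?thesis by simp
qed

lemma Lam_cont: assumes "\<bar>d\<bar> < 1" shows "continuous_on {-1..1} (Lam W d)"
proof (intro continuous_at_imp_continuous_on ballI)
  fix x assume "x \<in> {-1..(1::real)}"
  then have "\<bar>x\<bar> \<le> 1" by auto
  from dm_bounds[OF assms this] show "isCont (Lam W d) x"
    by (intro DERIV_isCont[OF Lam_deriv]) auto
qed

lemma Lam_strict_pos:
  assumes W: "0 < W" "W < 1" and d: "0 < d" "d < 1" and xy: "0 \<le> x" "x < y" "y \<le> 1"
  shows "Lam W d y < Lam W d x"
proof (rule DERIV_neg_imp_decreasing_open[OF xy(2)])
  fix z assume z: "x < z" "z < y"
  then have zz: "0 < z" "z < 1" "\<bar>z\<bar> \<le> 1" using xy by auto
  have b: "0 < 1 + d*z" "0 < 1 - d*z" using dm_bounds[OF _ zz(3)] d by auto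
  show "\<exists>e. (Lam W d has_real_derivative e) (at z) \<and> e < 0"
    using Lam_deriv[of d z W] b Lam_deriv_neg[OF W d zz(1,2)] by auto
next
  show "continuous_on {x..y} (Lam W d)"
    using Lam_cont[of d W] d xy by (rule_tac continuous_on_subset) auto
qed

lemma Lam_strict:
  assumes W: "0 < W" "W < 1" and d: "d \<noteq> 0" "\<bar>d\<bar> < 1" and xy: "0 \<le> x" "x < y" "y \<le> 1"
  shows "Lam W d y < Lam W d x"
proof (cases "d > 0")
  case True then show ?thesis using Lam_strict_pos[OF W True _ xy] d by auto
next
  case False
  then have "0 < -d" "-d < 1" using d by auto
  from Lam_strict_pos[OF W this xy] show ?thesis by (simp add: Lam_sym)
qed



lemma CMIM_gen:
  fixes px :: "'a \<Rightarrow> real" and Wc :: "'a \<Rightarrow> 'b \<Rightarrow> real"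
  assumes A: "finite A" and B: "finite B" and nn: "\<And>i j. 0 \<le> px i * Wc i j"
  shows "CMIM w A B px Wc = (\<Sum>j\<in>B. \<Sum>i\<in>A. px i * Wc i j * exp (w * (1 - px i * Wc i j / out_prob A px Wc j)))"
proof -
  have "CMIM w A B px Wc = (\<Sum>j\<in>B. if out_prob A px Wc j > 0 then out_prob A px Wc j *
        (\<Sum>i\<in>A. (px i * Wc i j / out_prob A px Wc j) *
                  exp (w * (1 - px i * Wc i j / out_prob A px Wc j))) else 0)"
    unfolding CMIM_def by (simp only: sum.inter_filter[OF B])
  also have "\<dots> = (\<Sum>j\<in>B. \<Sum>i\<in>A. px i * Wc i j * exp (w * (1 - px i * Wc i j / out_prob A px Wc j)))"
  proof (rule sum.cong[OF refl])
    fix j assume "j \<in> B"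
    show "(if out_prob A px Wc j > 0 then out_prob A px Wc j *
        (\<Sum>i\<in>A. (px i * Wc i j / out_prob A px Wc j) *
                  exp (w * (1 - px i * Wc i j / out_prob A px Wc j))) else 0) =
        (\<Sum>i\<in>A. px i * Wc i j * exp (w * (1 - px i * Wc i j / out_prob A px Wc j)))"
    proof (cases "out_prob A px Wc j > 0")
      case True
      then show ?thesis by (simp add: sum_distrib_left)
    next
      case False
      have "out_prob A px Wc j = 0" using False nn unfolding out_prob_def
        by (meson sum_nonneg order.antisym not_less)
      then have "\<forall>i\<in>A. px i * Wc i j = 0" using nn A unfolding out_prob_def
        by (subst (asm) sum_nonneg_eq_0_iff) auto
      then show ?thesis using False by (simp add: sum.neutral)
    qed
  qed
  finally show ?thesis .
qed

lemma piece:
  assumes "0 < q" "x + y = q"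
  shows "exp W * (q * Fm W ((y-x)/q)) = x*exp(2*W*(1 - x/q)) + y*exp(2*W*(1-y/q))"
proof -
  have e1: "exp W * exp (W*((y-x)/q)) = exp(2*W*(1 - x/q))"
    unfolding exp_add[symmetric] using assms(1) assms(2)[symmetric] by (intro arg_cong[where f=exp]) (simp add: field_simps)
  have e2: "exp W * exp (-(W*((y-x)/q))) = exp(2*W*(1 - y/q))"
    unfolding exp_add[symmetric] using assms(1) assms(2)[symmetric] by (intro arg_cong[where f=exp]) (simp add: field_simps)
  have c1: "q/2 * (1 - (y-x)/q) = x" and c2: "q/2*(1 + (y-x)/q) = y" using assms(1) assms(2)[symmetric] by (simp_all add: field_simps)
  have g: "\<And>K t E1 E2::real. K*(q*(((1-t)*E1 + (1+t)*E2)/2)) = (q/2*(1-t))*(K*E1) + (q/2*(1+t))*(K*E2)"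
    by (simp add: algebra_simps add_divide_distrib diff_divide_distrib)
  have "exp W * (q * Fm W ((y-x)/q)) = (q/2 * (1 - (y-x)/q)) * (exp W * exp (W*((y-x)/q)))
      + (q/2*(1 + (y-x)/q)) * (exp W * exp (-(W*((y-x)/q))))"
    unfolding Fm_def by (rule g)
  then show ?thesis unfolding c1 c2 e1 e2 .
qed

lemma leak_closed:
  assumes p: "0 \<le> p" "p \<le> 1" and b: "0 \<le> b" "b \<le> 1"
  shows "leak w b p = (p*exp(w*(1-p)) + (1-p)*exp(w*(1-(1-p))))
     - (p*(1-b)*exp(w*(1 - p*(1-b)/(p*(1-b) + (1-p)*b))) + (1-p)*b*exp(w*(1 - (1-p)*b/(p*(1-b) + (1-p)*b)))
      + p*b*exp(w*(1 - p*b/(p*b + (1-p)*(1-b)))) + (1-p)*(1-b)*exp(w*(1 - (1-p)*(1-b)/(p*b + (1-p)*(1-b)))))"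
proof -
  have nn: "\<And>i j. 0 \<le> bin_input p i * bsc b i j" unfolding bin_input_def bsc_def using p b by auto
  show ?thesis
    unfolding leak_def CMIM_gen[OF finite finite nn]
    unfolding MIM_def out_prob_def bin_input_def bsc_def UNIV_bool
    by (simp add: algebra_simps)
qed



lemma leak_Lam:
  assumes p: "0 \<le> p" "p \<le> 1" and b: "0 < b" "b < 1"
  shows "leak w b p = exp (w/2) * Lam (w/2) (1-2*b) (1-2*p)"
proof -
  define q1 where "q1 = p*(1-b) + (1-p)*b"
  define q2 where "q2 = p*b + (1-p)*(1-b)"
  have q1p: "0 < q1"
  proof -
    have "0 < (1-p)*b \<or> 0 < p*(1-b)" using p b by (cases "p = 1") auto
    moreover have "0 \<le> (1-p)*b" "0 \<le> p*(1-b)" using p b by auto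
    ultimately show ?thesis unfolding q1_def by linarith
  qed
  have q2p: "0 < q2"
  proof -
    have "0 < (1-p)*(1-b) \<or> 0 < p*b" using p b by (cases "p = 1") auto
    moreover have "0 \<le> (1-p)*(1-b)" "0 \<le> p*b" using p b by auto
    ultimately show ?thesis unfolding q2_def by linarith
  qed
  have c1: "(1 - (1-2*b)*(1-2*p))/2 = q1" unfolding q1_def by (simp add: field_simps)
  have c2: "(1 + (1-2*b)*(1-2*p))/2 = q2" unfolding q2_def by (simp add: field_simps)
  have t1: "tau (-(1-2*b)) (1-2*p) = ((1-p)*b - p*(1-b))/q1"
  proof -
    have "1 + -(1-2*b)*(1-2*p) = 2*q1" using c1 by (simp add: algebra_simps)
    then show ?thesis unfolding tau_def using q1p by (simp add: field_simps)
  qed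
  have t2: "tau (1-2*b) (1-2*p) = ((1-p)*(1-b) - p*b)/q2"
  proof -
    have "1 + (1-2*b)*(1-2*p) = 2*q2" using c2 by (simp add: algebra_simps)
    then show ?thesis unfolding tau_def using q2p by (simp add: field_simps)
  qed
  have m0: "1 - 2*p = ((1-p) - p)/1" by simp
  have P0: "exp (w/2) * (1 * Fm (w/2) (((1-p) - p)/1)) = p*exp(w*(1-p)) + (1-p)*exp(w*(1-(1-p)))"
    using piece[of 1 p "1-p" "w/2"] by simp
  have P1: "exp (w/2) * (q1 * Fm (w/2) (((1-p)*b - p*(1-b))/q1)) =
      p*(1-b)*exp(w*(1 - p*(1-b)/q1)) + (1-p)*b*exp(w*(1 - (1-p)*b/q1))"
    using piece[OF q1p, of "p*(1-b)" "(1-p)*b" "w/2"] q1_def by simp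
  have P2: "exp (w/2) * (q2 * Fm (w/2) (((1-p)*(1-b) - p*b)/q2)) =
      p*b*exp(w*(1 - p*b/q2)) + (1-p)*(1-b)*exp(w*(1 - (1-p)*(1-b)/q2))"
    using piece[OF q2p, of "p*b" "(1-p)*(1-b)" "w/2"] q2_def by simp
  have "exp (w/2) * Lam (w/2) (1-2*b) (1-2*p) =
     exp (w/2) * (1 * Fm (w/2) (((1-p) - p)/1)) - exp (w/2) * (q1 * Fm (w/2) (((1-p)*b - p*(1-b))/q1))
      - exp (w/2) * (q2 * Fm (w/2) (((1-p)*(1-b) - p*b)/q2))"
    unfolding Lam_def c1 c2 t1 t2 by (simp add: algebra_simps)
  also have "\<dots> = leak w b p"
    unfolding P0 P1 P2 unfolding leak_closed[OF p b[THEN less_imp_le]] q1_def q2_def by simp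
  finally show ?thesis ..
qed



lemma xexp_self: "x * exp (w * (1 - x/x)) = (x::real)" by (cases "x = 0") auto

lemma leak_01:
  assumes p: "0 \<le> p" "p \<le> 1" and b: "b = 0 \<or> b = 1"
  shows "leak w b p = exp (w/2) * Fm (w/2) (1-2*p) - 1"
proof -
  have P0: "exp (w/2) * (1 * Fm (w/2) (((1-p) - p)/1)) = p*exp(w*(1-p)) + (1-p)*exp(w*(1-(1-p)))"
    using piece[of 1 p "1-p" "w/2"] by simp
  have P0': "exp (w/2) * Fm (w/2) (1-2*p) = p*exp(w*(1-p)) + (1-p)*exp(w*(1-(1-p)))"
    using P0 by simp
  from b show ?thesis
  proof
    assume b0: "b = 0"
    show ?thesis unfolding b0 leak_closed[OF p order_refl zero_le_one] P0'
      by (cases "p = 0"; cases "p = 1") auto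
  next
    assume b1: "b = 1"
    show ?thesis unfolding b1 leak_closed[OF p zero_le_one order_refl] P0'
      by (cases "p = 0"; cases "p = 1") auto
  qed
qed

definition Hq :: "real \<Rightarrow> real" where "Hq = bin_entropy"

lemma xlog_split: assumes "0 \<le> x" "0 \<le> y" "0 \<le> z" "x*y \<noteq> 0 \<longrightarrow> z > 0"
  shows "x*y*log 2 (y/z) = x*y*log 2 y - x*y*log 2 z"
proof (cases "x*y = 0")
  case True then show ?thesis by auto
next
  case False
  then have "y > 0" "z > 0" using assms by auto
  then show ?thesis by (simp add: log_divide algebra_simps)
qed

lemma MI_closed:
  assumes p: "0 \<le> p" "p \<le> 1" and b: "0 \<le> b" "b \<le> 1"
  shows "bsc_MI b p = bin_entropy (p*(1-b) + (1-p)*b) - bin_entropy b"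
proof -
  have a1: "0 \<le> p*(1-b)" "0 \<le> (1-p)*b" "0 \<le> p*b" "0 \<le> (1-p)*(1-b)" using p b by auto
  have o1: "1 - (p*(1-b) + (1-p)*b) = p*b + (1-p)*(1-b)" by (simp add: algebra_simps)
  show ?thesis
    unfolding bsc_MI_def mutual_info_def out_prob_def bin_input_def bsc_def UNIV_bool bin_entropy_def o1
    using p b a1
    apply simp
    apply (subst xlog_split, simp, simp, simp, simp add: add_pos_nonneg add_nonneg_pos)+
    apply (simp add: algebra_simps)
    done
qed



lemma H_sym: "bin_entropy (1-x) = bin_entropy x" unfolding bin_entropy_def by (simp add: algebra_simps)

lemma H_nonneg: assumes "0 \<le> x" "x \<le> 1" shows "0 \<le> bin_entropy x"
proof -
  have a: "x * log 2 x \<le> 0"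
    using assms by (cases "x = 0") (auto intro!: mult_nonneg_nonpos simp: log_le_zero_cancel_iff)
  have b: "(1-x) * log 2 (1-x) \<le> 0"
    using assms by (cases "x = 1") (auto intro!: mult_nonneg_nonpos simp: log_le_zero_cancel_iff)
  show ?thesis unfolding bin_entropy_def using a b by simp
qed

lemma H_deriv: assumes "0 < x" "x < 1"
  shows "(bin_entropy has_real_derivative (log 2 (1-x) - log 2 x)) (at x)"
proof -
  have d1: "((\<lambda>x. x * ln x) has_real_derivative (ln x + 1)) (at x)"
    using assms by (auto intro!: derivative_eq_intros)
  have d2: "((\<lambda>x. (1-x) * ln (1-x)) has_real_derivative (- ln (1-x) - 1)) (at x)"
    using assms by (auto intro!: derivative_eq_intros)
  have f: "bin_entropy = (\<lambda>x. - (x * ln x) / ln 2 - ((1-x) * ln (1-x)) / ln 2)"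
    unfolding bin_entropy_def log_def by (rule ext) simp
  have "((\<lambda>x. - (x * ln x) / ln 2 - ((1-x) * ln (1-x)) / ln 2) has_real_derivative
        (- (ln x + 1)) / ln 2 - (- ln (1-x) - 1) / ln 2) (at x)"
    by (intro DERIV_diff DERIV_cdivide DERIV_minus d1 d2)
  moreover have "(- (ln x + 1)) / ln 2 - (- ln (1-x) - 1) / ln 2 = log 2 (1-x) - log 2 x"
    unfolding log_def by (simp add: field_simps)
  ultimately show ?thesis unfolding f by simp
qed

lemma H_mono: assumes "0 \<le> x" "x \<le> y" "y \<le> 1/2" shows "bin_entropy x \<le> bin_entropy y"
proof (cases "x = 0")
  case True
  then have "bin_entropy x = 0" unfolding bin_entropy_def by simp
  then show ?thesis using H_nonneg[of y] assms by simp
next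
  case False
  then have x0: "0 < x" using assms by simp
  show ?thesis
  proof (rule DERIV_nonneg_imp_nondecreasing[OF assms(2)])
    fix z assume z: "x \<le> z" "z \<le> y"
    then have z01: "0 < z" "z < 1" using x0 assms by auto
    have "log 2 z \<le> log 2 (1-z)" using z01 z assms by simp
    then show "\<exists>d. (bin_entropy has_real_derivative d) (at z) \<and> 0 \<le> d"
      using H_deriv[OF z01] by auto
  qed
qed

lemma H_half: "bin_entropy (1/2) = 1" unfolding bin_entropy_def by (simp add: log_divide)

lemma MI_mono:
  assumes b: "0 \<le> b" "b \<le> 1" and p: "0 \<le> p" "p \<le> p'" "p' \<le> 1/2"
  shows "bsc_MI b p \<le> bsc_MI b p'"
proof -
  have p1: "0 \<le> p" "p \<le> 1" "0 \<le> p'" "p' \<le> 1" using p by auto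
  have q: "p*(1-b) + (1-p)*b = b + p*(1-2*b)" "p'*(1-b) + (1-p')*b = b + p'*(1-2*b)" by (simp_all add: algebra_simps)
  have "bin_entropy (b + p*(1-2*b)) \<le> bin_entropy (b + p'*(1-2*b))"
  proof (cases "b \<le> 1/2")
    case True
    have "p*(1-2*b) \<le> p'*(1-2*b)" using True p by (intro mult_right_mono) auto
    moreover have "p'*(1-2*b) \<le> (1/2)*(1-2*b)" using True p by (intro mult_right_mono) auto
    moreover have "0 \<le> p*(1-2*b)" using True p by simp
    ultimately show ?thesis using b True by (intro H_mono) (auto simp: algebra_simps)
  next
    case False
    have "p*(2*b-1) \<le> p'*(2*b-1)" using False p by (intro mult_right_mono) auto
    moreover have "p'*(2*b-1) \<le> (1/2)*(2*b-1)" using False p by (intro mult_right_mono) auto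
    moreover have "0 \<le> p*(2*b-1)" using False p by simp
    ultimately have "bin_entropy (1 - (b + p*(1-2*b))) \<le> bin_entropy (1 - (b + p'*(1-2*b)))"
      using b False by (intro H_mono) (auto simp: algebra_simps)
    then show ?thesis by (simp add: H_sym)
  qed
  then show ?thesis unfolding MI_closed[OF p1(1,2) b] MI_closed[OF p1(3,4) b] q by simp
qed



lemma Fm_strict:
  assumes W: "0 < W" "W < 1" and xy: "0 \<le> x" "x < y" "y \<le> 1"
  shows "Fm W y < Fm W x"
proof (rule DERIV_neg_imp_decreasing_open[OF xy(2)])
  fix z assume z: "x < z" "z < y"
  then have z0: "0 < z" using xy by simp
  have eq: "F1 W z = ((W-1)*(exp (W*z) - exp (-(W*z))) - W*z*(exp (W*z) + exp (-(W*z))))/2"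
    unfolding F1_def by (simp add: algebra_simps)
  have "exp (-(W*z)) \<le> exp (W*z)" using W z0 by simp
  then have "(W-1)*(exp (W*z) - exp (-(W*z))) \<le> 0" using W by (intro mult_nonpos_nonneg) auto
  moreover have "0 < W*z*(exp (W*z) + exp (-(W*z)))" using W z0 by (intro mult_pos_pos add_pos_pos) auto
  ultimately have "F1 W z < 0" unfolding eq by simp
  then show "\<exists>d. (Fm W has_real_derivative d) (at z) \<and> d < 0" using Fm_deriv by blast
next
  show "continuous_on {x..y} (Fm W)"
    by (intro continuous_at_imp_continuous_on ballI DERIV_isCont[OF Fm_deriv])
qed

lemma leak_strict:
  assumes w: "0 < w" "w < 2" and b: "0 \<le> b" "b \<le> 1" "b \<noteq> 1/2"
    and p: "0 \<le> p" "p < p'" "p' \<le> 1/2"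
  shows "leak w b p < leak w b p'"
proof -
  have W: "0 < w/2" "w/2 < 1" using w by auto
  have p1: "0 \<le> p" "p \<le> 1" "0 \<le> p'" "p' \<le> 1" using p by auto
  show ?thesis
  proof (cases "b = 0 \<or> b = 1")
    case True
    have "Fm (w/2) (1-2*p) < Fm (w/2) (1-2*p')" using Fm_strict[OF W, of "1-2*p'" "1-2*p"] p by simp
    then show ?thesis unfolding leak_01[OF p1(1,2) True] leak_01[OF p1(3,4) True] by simp
  next
    case False
    then have b': "0 < b" "b < 1" using b by auto
    have d: "1-2*b \<noteq> 0" "\<bar>1-2*b\<bar> < 1" using b' b by auto
    have "Lam (w/2) (1-2*b) (1-2*p) < Lam (w/2) (1-2*b) (1-2*p')"
      using Lam_strict[OF W d, of "1-2*p'" "1-2*p"] p by simp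
    then show ?thesis unfolding leak_Lam[OF p1(1,2) b'] leak_Lam[OF p1(3,4) b'] by simp
  qed
qed

lemma leak_cont:
  assumes b: "0 \<le> b" "b \<le> 1"
  shows "continuous_on {0..1/2} (leak w b)"
proof (cases "b = 0 \<or> b = 1")
  case True
  have "continuous_on {0..1/2} (\<lambda>p. exp (w/2) * Fm (w/2) (1-2*p) - 1)"
    unfolding Fm_def by (intro continuous_intros) auto
  moreover have "\<And>x. x \<in> {0..1/2} \<Longrightarrow> leak w b x = exp (w/2) * Fm (w/2) (1-2*x) - 1"
    by (auto simp: leak_01[OF _ _ True])
  ultimately show ?thesis using continuous_on_cong[OF refl, of "{0..1/2}" "leak w b"] by simp
next
  case False
  then have b': "0 < b" "b < 1" using b by auto
  have d: "\<bar>1-2*b\<bar> < 1" using b' by auto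
  have c1: "continuous_on {0..1/2} (\<lambda>p::real. 1-2*p)" by (intro continuous_intros)
  have "continuous_on {0..1/2} (\<lambda>p. Lam (w/2) (1-2*b) (1-2*p))"
  proof -
    have sub: "(\<lambda>p. 1-2*p) ` {0..1/2} \<subseteq> {-1..1::real}" by auto
    show ?thesis
      using continuous_on_compose[OF c1 continuous_on_subset[OF Lam_cont[OF d] sub], unfolded o_def] .
  qed
  then have "continuous_on {0..1/2} (\<lambda>p. exp (w/2) * Lam (w/2) (1-2*b) (1-2*p))"
    by (intro continuous_intros)
  moreover have "\<And>x. x \<in> {0..1/2} \<Longrightarrow> leak w b x = exp (w/2) * Lam (w/2) (1-2*b) (1-2*x)"
    by (auto simp: leak_Lam[OF _ _ b'])
  ultimately show ?thesis using continuous_on_cong[OF refl, of "{0..1/2}" "leak w b"] by simp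
qed

lemma leak_zero: assumes b: "0 \<le> b" "b \<le> 1" shows "leak w b 0 = 0"
  unfolding leak_closed[OF order_refl zero_le_one b]
  using b by (cases "b = 0"; cases "b = 1") auto

lemma leak_half: assumes b: "0 \<le> b" "b \<le> 1"
  shows "leak w b (1/2) = exp (w/2) - (b * exp (w * (1 - b)) + (1 - b) * exp (w * b))"
proof -
  have a: "1/2*(1-b) + (1-1/2)*b = (1/2::real)" "1/2*b + (1-1/2)*(1-b) = (1/2::real)" by (simp_all add: field_simps)
  have e: "w*(1 - 1/2) = w/2" by simp
  show ?thesis unfolding leak_closed[of "1/2", OF _ _ b, simplified] a
    by (simp add: field_simps)
qed



theorem proposition5:
  fixes w b eps :: real
  assumes "0 < w" "w < 2" "0 \<le> b" "b \<le> 1" "0 < eps"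
  defines "C \<equiv> exp (w / 2) - (b * exp (w * (1 - b)) + (1 - b) * exp (w * b))"
  shows "(eps \<ge> C \<longrightarrow> is_opt_value w b eps (1 - bin_entropy b))
       \<and> (eps \<le> C \<longrightarrow>
            (\<exists>ps\<in>{0..1/2}. leak w b ps = eps) \<and>
            (\<forall>ps\<in>{0..1/2}. leak w b ps = eps \<longrightarrow>
               is_opt_value w b eps
                 (bin_entropy (ps * (1 - b) + (1 - ps) * b) - bin_entropy b)))"
proof -
  note w = assms(1,2) and b = assms(3,4) and e = assms(5)
  have LH: "leak w b (1/2) = C" unfolding C_def by (rule leak_half[OF b])
  have L0: "leak w b 0 = 0" by (rule leak_zero[OF b])
  have MIh: "bsc_MI b (1/2) = 1 - bin_entropy b"
  proof -
    have h: "1/2*(1-b) + (1-1/2)*b = (1/2::real)" by (simp add: field_simps)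
    have "bsc_MI b (1/2) = bin_entropy (1/2*(1-b) + (1-1/2)*b) - bin_entropy b"
      using MI_closed[of "1/2" b] b by simp
    then show ?thesis unfolding h H_half .
  qed
  have part1: "eps \<ge> C \<longrightarrow> is_opt_value w b eps (1 - bin_entropy b)"
  proof
    assume "C \<le> eps"
    show "is_opt_value w b eps (1 - bin_entropy b)"
      unfolding is_opt_value_def
    proof
      show "\<exists>p\<in>{0..1/2}. leak w b p \<le> eps \<and> bsc_MI b p = 1 - bin_entropy b"
        using LH MIh \<open>C \<le> eps\<close> by (intro bexI[of _ "1/2"]) auto
      show "\<forall>p\<in>{0..1/2}. leak w b p \<le> eps \<longrightarrow> bsc_MI b p \<le> 1 - bin_entropy b"
        using MI_mono[OF b, of _ "1/2"] MIh by auto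
    qed
  qed
  have part2: "eps \<le> C \<longrightarrow>
            (\<exists>ps\<in>{0..1/2}. leak w b ps = eps) \<and>
            (\<forall>ps\<in>{0..1/2}. leak w b ps = eps \<longrightarrow>
               is_opt_value w b eps
                 (bin_entropy (ps * (1 - b) + (1 - ps) * b) - bin_entropy b))"
  proof
    assume eC: "eps \<le> C"
    have bh: "b \<noteq> 1/2"
    proof
      assume bb: "b = 1/2"
      have "C = 0" unfolding C_def bb by (simp add: field_simps)
      then show False using eC e by simp
    qed
    have ex: "\<exists>ps\<in>{0..1/2}. leak w b ps = eps"
      using IVT'[of "leak w b" 0 eps "1/2", OF _ _ _ leak_cont[OF b]] L0 LH e eC by auto
    have all: "\<forall>ps\<in>{0..1/2}. leak w b ps = eps \<longrightarrow>
               is_opt_value w b eps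
                 (bin_entropy (ps * (1 - b) + (1 - ps) * b) - bin_entropy b)"
    proof (intro ballI impI)
      fix ps :: real assume ps: "ps \<in> {0..1/2}" and lps: "leak w b ps = eps"
      have MIps: "bsc_MI b ps = bin_entropy (ps * (1 - b) + (1 - ps) * b) - bin_entropy b"
        using MI_closed[of ps b] ps b by simp
      show "is_opt_value w b eps (bin_entropy (ps * (1 - b) + (1 - ps) * b) - bin_entropy b)"
        unfolding is_opt_value_def
      proof
        show "\<exists>p\<in>{0..1/2}. leak w b p \<le> eps \<and> bsc_MI b p = bin_entropy (ps * (1 - b) + (1 - ps) * b) - bin_entropy b"
          using ps lps MIps by auto
        show "\<forall>p\<in>{0..1/2}. leak w b p \<le> eps \<longrightarrow> bsc_MI b p \<le> bin_entropy (ps * (1 - b) + (1 - ps) * b) - bin_entropy b"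
        proof (intro ballI impI)
          fix p :: real assume p: "p \<in> {0..1/2}" and lp: "leak w b p \<le> eps"
          have "p \<le> ps"
          proof (rule ccontr)
            assume "\<not> p \<le> ps"
            then have "leak w b ps < leak w b p" using leak_strict[OF w b bh, of ps p] ps p by auto
            then show False using lp lps by simp
          qed
          then show "bsc_MI b p \<le> bin_entropy (ps * (1 - b) + (1 - ps) * b) - bin_entropy b"
            using MI_mono[OF b, of p ps] p ps MIps by auto
        qed
      qed
    qed
    show "(\<exists>ps\<in>{0..1/2}. leak w b ps = eps) \<and>
            (\<forall>ps\<in>{0..1/2}. leak w b ps = eps \<longrightarrow>
               is_opt_value w b eps
                 (bin_entropy (ps * (1 - b) + (1 - ps) * b) - bin_entropy b))"
      using ex all by blast
  qed
  show ?thesis using part1 part2 by blast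
qed


end
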